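(* Let $n\ge3$ and let $A$ be a set of $m$ vertices of $C_n$ with $2\le m\le n$. (1) If $n$ is even or $m$ is odd, then $A$ is a maximizer of $W$ on $C_n$ if and only if $A$ is balanced in $C_n$. (2) If $n$ is odd and $m$ is even, then $A$ is a maximizer of $W$ on $C_n$ if and only if $A$ is weakly balanced in $C_n$; moreover, in this case no maximizer of $W$ on $C_n$ of cardinality $m$ is balanced. (3) In all cases, $A$ is a maximizer of $W$ on $C_n$ if and only if $A$ is weakly balanced in $C_n$.
   Context: $C_n$ has vertex set $\{0,\dots,n-1\}$ with $i$ adjacent to $i+1\bmod n$. $W(A)=\sum_{\{u,v\}\subseteq A,u\ne v}d(u,v)$ over unordered pairs, $d$ geodesic distance; $A$ is a maximizer of $W$ if $W(A)=\max\{W(B):|B|=|A|\}$. A set of vertices is connected if it induces a connected subgraph. A partition of $V(G)$ is equitable if any two blocks differ in size by at most one. $A$ is balanced in $G$ if for every equitable partition $\{P,Q\}$ of $V(G)$ into two connected blocks, $|A\cap P|$ and $|A\cap Q|$ differ by at most one. $A$ is weakly balanced in $G$ if for every equitable partition $\{P,Q\}$ of $V(G)$ into two connected blocks, $|A\cap P|$ and $|A\cap Q|$ differ by at most two, and whenever $|A\cap Q|=|A\cap P|+2$ we have $|P|<|Q|$. *)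

theory Defs
  imports Main
begin

definition cyc_V :: "nat \<Rightarrow> nat set" where
  "cyc_V n = {..<n}"

definition cyc_adj :: "nat \<Rightarrow> nat \<Rightarrow> nat \<Rightarrow> bool" where
  "cyc_adj n u v \<longleftrightarrow> u < n \<and> v < n \<and> u \<noteq> v \<and> (v = (u + 1) mod n \<or> u = (v + 1) mod n)"

definition is_walk :: "(nat \<Rightarrow> nat \<Rightarrow> bool) \<Rightarrow> nat list \<Rightarrow> nat \<Rightarrow> nat \<Rightarrow> bool" where
  "is_walk E xs u v \<longleftrightarrow> xs \<noteq> [] \<and> hd xs = u \<and> last xs = v \<and> successively E xs"

definition gdist :: "(nat \<Rightarrow> nat \<Rightarrow> bool) \<Rightarrow> nat \<Rightarrow> nat \<Rightarrow> nat" where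
  "gdist E u v = (LEAST k. \<exists>xs. is_walk E xs u v \<and> length xs = Suc k)"

definition Wiener :: "nat \<Rightarrow> nat set \<Rightarrow> nat" where
  "Wiener n A = (\<Sum>(u, v) \<in> {(u, v). u \<in> A \<and> v \<in> A \<and> u < v}. gdist (cyc_adj n) u v)"

definition is_maximizer :: "nat \<Rightarrow> nat set \<Rightarrow> bool" where
  "is_maximizer n A \<longleftrightarrow> A \<subseteq> cyc_V n \<and>
     (\<forall>B. B \<subseteq> cyc_V n \<and> card B = card A \<longrightarrow> Wiener n B \<le> Wiener n A)"

definition conn_set :: "nat \<Rightarrow> nat set \<Rightarrow> bool" where
  "conn_set n S \<longleftrightarrow> S \<subseteq> cyc_V n \<and>
     (\<forall>u\<in>S. \<forall>v\<in>S. \<exists>xs. is_walk (cyc_adj n) xs u v \<and> set xs \<subseteq> S)"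

definition eq_conn_bipart :: "nat \<Rightarrow> nat set \<Rightarrow> nat set \<Rightarrow> bool" where
  "eq_conn_bipart n P Q \<longleftrightarrow> P \<noteq> {} \<and> Q \<noteq> {} \<and> P \<inter> Q = {} \<and> P \<union> Q = cyc_V n \<and>
     \<bar>int (card P) - int (card Q)\<bar> \<le> 1 \<and> conn_set n P \<and> conn_set n Q"

definition balanced :: "nat \<Rightarrow> nat set \<Rightarrow> bool" where
  "balanced n A \<longleftrightarrow> (\<forall>P Q. eq_conn_bipart n P Q \<longrightarrow>
     \<bar>int (card (A \<inter> P)) - int (card (A \<inter> Q))\<bar> \<le> 1)"

definition weakly_balanced :: "nat \<Rightarrow> nat set \<Rightarrow> bool" where
  "weakly_balanced n A \<longleftrightarrow> (\<forall>P Q. eq_conn_bipart n P Q \<longrightarrow>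
     \<bar>int (card (A \<inter> P)) - int (card (A \<inter> Q))\<bar> \<le> 2 \<and>
     (card (A \<inter> Q) = card (A \<inter> P) + 2 \<longrightarrow> card P < card Q))"

end

theory Submission
  imports Defs
begin


definition cdist :: "nat \<Rightarrow> nat \<Rightarrow> nat \<Rightarrow> int" where
  "cdist n u v = min ((int v - int u) mod int n) ((int u - int v) mod int n)"

lemma adj_mod:
  assumes "cyc_adj n u v"
  shows "int v mod int n = (int u + 1) mod int n \<or> int u mod int n = (int v + 1) mod int n"
proof -
  have "v = (u + 1) mod n \<or> u = (v + 1) mod n" using assms unfolding cyc_adj_def by auto
  then show ?thesis
  proof
    assume "v = (u + 1) mod n"
    then have "int v = (int u + 1) mod int n" by (simp add: zmod_int add.commute)
    then show ?thesis by simp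
  next
    assume "u = (v + 1) mod n"
    then have "int u = (int v + 1) mod int n" by (simp add: zmod_int add.commute)
    then show ?thesis by simp
  qed
qed

lemma walk_reach:
  assumes "successively (cyc_adj n) xs" "xs \<noteq> []"
  shows "\<exists>j. \<bar>j\<bar> \<le> int (length xs) - 1 \<and> (int (hd xs) + j) mod int n = int (last xs) mod int n"
  using assms
proof (induction xs rule: induct_list012)
  case 1 then show ?case by simp
next
  case (2 x) then show ?case by (intro exI[of _ 0]) simp
next
  case (3 x y zs)
  from 3 have adj: "cyc_adj n x y" and s: "successively (cyc_adj n) (y # zs)" by auto
  from "3.IH"(2)[OF s] obtain j where j: "\<bar>j\<bar> \<le> int (length (y#zs)) - 1"
     "(int y + j) mod int n = int (last (y#zs)) mod int n" by auto
  from adj_mod[OF adj] show ?case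
  proof
    assume h: "int y mod int n = (int x + 1) mod int n"
    have "(int x + (j+1)) mod int n = (int y + j) mod int n"
      using h by (metis add.commute add.left_commute mod_add_left_eq)
    then show ?thesis using j by (intro exI[of _ "j+1"]) auto
  next
    assume h: "int x mod int n = (int y + 1) mod int n"
    have "(int x + (j-1)) mod int n = (int x mod int n + (j-1)) mod int n" by (simp add: mod_add_left_eq)
    also have "\<dots> = ((int y + 1) mod int n + (j-1)) mod int n" using h by simp
    also have "\<dots> = (int y + 1 + (j-1)) mod int n" by (simp add: mod_add_left_eq)
    also have "\<dots> = (int y + j) mod int n" by simp
    finally have "(int x + (j-1)) mod int n = (int y + j) mod int n" .
    then show ?thesis using j by (intro exI[of _ "j-1"]) auto
  qed
qed

lemma cd_le:
  assumes "(int u + j) mod int n = int v mod int n"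
  shows "cdist n u v \<le> \<bar>j\<bar>"
proof (cases "j \<ge> 0")
  case True
  have "(int v - int u) mod int n = (int v mod int n - int u) mod int n"
    by (simp add: mod_diff_left_eq)
  also have "\<dots> = ((int u + j) mod int n - int u) mod int n" using assms by simp
  also have "\<dots> = (int u + j - int u) mod int n"
    by (simp add: mod_diff_left_eq)
  also have "\<dots> = j mod int n" by simp
  also have "\<dots> \<le> j" using True by (rule zmod_le_nonneg_dividend)
  finally show ?thesis unfolding cdist_def using True by simp
next
  case False
  have "(int u - int v) mod int n = (int u - int v mod int n) mod int n"
    by (simp add: mod_diff_right_eq)
  also have "\<dots> = (int u - (int u + j) mod int n) mod int n" using assms by simp
  also have "\<dots> = (int u - (int u + j)) mod int n"
    by (simp add: mod_diff_right_eq)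
  also have "\<dots> = (-j) mod int n" by simp
  also have "\<dots> \<le> -j" using False by (intro zmod_le_nonneg_dividend) simp
  finally show ?thesis unfolding cdist_def using False by simp
qed

lemma adj_step:
  assumes "n \<ge> 3"
  shows "cyc_adj n ((a + t) mod n) ((a + Suc t) mod n)"
proof -
  have "(a + Suc t) mod n = ((a + t) mod n + 1) mod n" by (simp add: mod_Suc_eq)
  moreover have "(a + t) mod n \<noteq> (a + Suc t) mod n"
  proof
    assume "(a + t) mod n = (a + Suc t) mod n"
    then have "(a + t) mod n = ((a+t) + 1) mod n" by simp
    then have "(a + t) mod n = Suc (a + t) mod n" by simp
    then show False using assms by (simp add: mod_Suc split: if_splits)
  qed
  ultimately show ?thesis using assms unfolding cyc_adj_def by auto
qed

lemma succ_upt: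
  assumes "n \<ge> 3"
  shows "successively (cyc_adj n) (map (\<lambda>j. (a + j) mod n) [s..<Suc t])"
proof (induction t)
  case 0 then show ?case by (cases s) auto
next
  case (Suc t)
  show ?case
  proof (cases "s \<le> Suc t")
    case False then show ?thesis by simp
  next
    case True
    have e: "[s..<Suc (Suc t)] = [s..<Suc t] @ [Suc t]" using True by simp
    show ?thesis
    proof (cases "s \<le> t")
      case True
      have "last (map (\<lambda>j. (a + j) mod n) [s..<Suc t]) = (a + t) mod n"
        using True by (simp add: last_map)
      then show ?thesis using Suc adj_step[OF assms, of a t] True
        unfolding e by (auto simp: successively_append_iff)
    next
      case False
      then have "s = Suc t" using \<open>s \<le> Suc t\<close> by simp
      then show ?thesis by simp
    qed
  qed
qed

lemma walk_fw:
  assumes "n \<ge> 3" "s \<le> t"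
  shows "is_walk (cyc_adj n) (map (\<lambda>j. (a + j) mod n) [s..<Suc t]) ((a + s) mod n) ((a + t) mod n)"
  using succ_upt[OF assms(1), of a s t] assms(2) unfolding is_walk_def
  by (simp add: last_map hd_map del: upt_Suc)

lemma cyc_adj_sym: "cyc_adj n u v = cyc_adj n v u"
  unfolding cyc_adj_def by auto

lemma walk_bw:
  assumes "n \<ge> 3" "s \<le> t"
  shows "is_walk (cyc_adj n) (rev (map (\<lambda>j. (a + j) mod n) [s..<Suc t])) ((a + t) mod n) ((a + s) mod n)"
proof -
  have "successively (\<lambda>x y. cyc_adj n y x) (map (\<lambda>j. (a + j) mod n) [s..<Suc t])"
    using succ_upt[OF assms(1), of a s t] by (simp add: cyc_adj_sym del: upt_Suc)
  then show ?thesis using assms(2) unfolding is_walk_def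
    by (simp add: last_map hd_map hd_rev last_rev del: upt_Suc)
qed

lemma cdist_nonneg: "n > 0 \<Longrightarrow> cdist n u v \<ge> 0"
  unfolding cdist_def by simp

lemma gdist_eq:
  assumes "n \<ge> 3" "u < n" "v < n"
  shows "gdist (cyc_adj n) u v = nat (cdist n u v)"
proof -
  define P where "P = (\<lambda>k. \<exists>xs. is_walk (cyc_adj n) xs u v \<and> length xs = Suc k)"
  have ex: "P (nat (cdist n u v))"
  proof (cases "(int v - int u) mod int n \<le> (int u - int v) mod int n")
    case True
    define d where "d = nat ((int v - int u) mod int n)"
    have cd: "cdist n u v = (int v - int u) mod int n" using True unfolding cdist_def by simp
    have "int ((u + d) mod n) = (int u + (int v - int u) mod int n) mod int n"
      using assms unfolding d_def by (simp add: zmod_int)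
    also have "\<dots> = (int u + (int v - int u)) mod int n" by (simp add: mod_add_right_eq)
    also have "\<dots> = int v" using assms by simp
    finally have hv: "(u + d) mod n = v" by simp
    have hu: "(u + 0) mod n = u" using assms by simp
    show ?thesis unfolding P_def
      using walk_fw[OF assms(1), of 0 d u] hu hv cd unfolding d_def
      by (intro exI[of _ "map (\<lambda>j. (u + j) mod n) [0..<Suc d]"]) (simp add: d_def)
  next
    case False
    define d where "d = nat ((int u - int v) mod int n)"
    have cd: "cdist n u v = (int u - int v) mod int n" using False unfolding cdist_def by simp
    have "int ((v + d) mod n) = (int v + (int u - int v) mod int n) mod int n"
      using assms unfolding d_def by (simp add: zmod_int)
    also have "\<dots> = (int v + (int u - int v)) mod int n" by (simp add: mod_add_right_eq)
    also have "\<dots> = int u" using assms by simp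
    finally have hu: "(v + d) mod n = u" by simp
    have hv: "(v + 0) mod n = v" using assms by simp
    show ?thesis unfolding P_def
      using walk_bw[OF assms(1), of 0 d v] hu hv cd unfolding d_def
      by (intro exI[of _ "rev (map (\<lambda>j. (v + j) mod n) [0..<Suc d])"]) (simp add: d_def)
  qed
  have lb: "nat (cdist n u v) \<le> k" if "P k" for k
  proof -
    from that obtain xs where xs: "is_walk (cyc_adj n) xs u v" "length xs = Suc k" unfolding P_def by auto
    then obtain j where j: "\<bar>j\<bar> \<le> int (length xs) - 1" "(int u + j) mod int n = int v mod int n"
      using walk_reach[of n xs] unfolding is_walk_def by auto
    from cd_le[OF j(2)] j(1) xs(2) show ?thesis by simp
  qed
  show ?thesis unfolding gdist_def P_def[symmetric]
    using ex lb by (intro Least_equality) auto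
qed



definition arc :: "nat \<Rightarrow> int \<Rightarrow> nat \<Rightarrow> nat set" where
  "arc n a l = {v. v < n \<and> (int v - a) mod int n < int l}"

lemma nat_mod_lt: "n > 0 \<Longrightarrow> nat (x mod int n) < n"
  by (simp add: nat_less_iff)

lemma reidx_minus:
  assumes "n > 0"
  shows "card {i. i < n \<and> Q ((c - int i) mod int n)} = card {j. j < n \<and> Q (int j)}"
proof (rule bij_betw_same_card[of "\<lambda>i. nat ((c - int i) mod int n)"])
  show "bij_betw (\<lambda>i. nat ((c - int i) mod int n)) {i. i < n \<and> Q ((c - int i) mod int n)} {j. j < n \<and> Q (int j)}"
  proof (rule bij_betw_imageI)
    show "inj_on (\<lambda>i. nat ((c - int i) mod int n)) {i. i < n \<and> Q ((c - int i) mod int n)}"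
    proof (rule inj_onI)
      fix i i' assume i: "i \<in> {i. i < n \<and> Q ((c - int i) mod int n)}" and i': "i' \<in> {i. i < n \<and> Q ((c - int i) mod int n)}"
        and e: "nat ((c - int i) mod int n) = nat ((c - int i') mod int n)"
      have e2: "(c - int i) mod int n = (c - int i') mod int n" using e assms by (subst (asm) eq_nat_nat_iff) auto
      have "int i = (c - (c - int i) mod int n) mod int n" using i by (simp add: mod_diff_right_eq)
      also have "\<dots> = (c - (c - int i') mod int n) mod int n" using e2 by simp
      also have "\<dots> = int i'" using i' by (simp add: mod_diff_right_eq)
      finally show "i = i'" by simp
    qed
  next
    show "(\<lambda>i. nat ((c - int i) mod int n)) ` {i. i < n \<and> Q ((c - int i) mod int n)} = {j. j < n \<and> Q (int j)}"
    proof
      show "(\<lambda>i. nat ((c - int i) mod int n)) ` {i. i < n \<and> Q ((c - int i) mod int n)} \<subseteq> {j. j < n \<and> Q (int j)}"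
        using assms nat_mod_lt by auto
    next
      show "{j. j < n \<and> Q (int j)} \<subseteq> (\<lambda>i. nat ((c - int i) mod int n)) ` {i. i < n \<and> Q ((c - int i) mod int n)}"
      proof
        fix j assume j: "j \<in> {j. j < n \<and> Q (int j)}"
        define i where "i = nat ((c - int j) mod int n)"
        have ii: "int i = (c - int j) mod int n" using assms unfolding i_def by simp
        have "(c - int i) mod int n = (c - (c - int j)) mod int n" unfolding ii by (simp add: mod_diff_right_eq)
        also have "\<dots> = int j" using j by simp
        finally have h: "(c - int i) mod int n = int j" .
        have "i < n" using assms ii by (metis Euclidean_Rings.pos_mod_bound of_nat_0_less_iff of_nat_less_iff)
        then show "j \<in> (\<lambda>i. nat ((c - int i) mod int n)) ` {i. i < n \<and> Q ((c - int i) mod int n)}"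
          using h j by (intro image_eqI[of _ _ i]) auto
      qed
    qed
  qed
qed

lemma reidx_plus:
  assumes "n > 0"
  shows "card {i. i < n \<and> Q ((int i - c) mod int n)} = card {j. j < n \<and> Q (int j)}"
proof (rule bij_betw_same_card[of "\<lambda>i. nat ((int i - c) mod int n)"])
  show "bij_betw (\<lambda>i. nat ((int i - c) mod int n)) {i. i < n \<and> Q ((int i - c) mod int n)} {j. j < n \<and> Q (int j)}"
  proof (rule bij_betw_imageI)
    show "inj_on (\<lambda>i. nat ((int i - c) mod int n)) {i. i < n \<and> Q ((int i - c) mod int n)}"
    proof (rule inj_onI)
      fix i i' assume i: "i \<in> {i. i < n \<and> Q ((int i - c) mod int n)}" and i': "i' \<in> {i. i < n \<and> Q ((int i - c) mod int n)}"
        and e: "nat ((int i - c) mod int n) = nat ((int i' - c) mod int n)"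
      have e2: "(int i - c) mod int n = (int i' - c) mod int n" using e assms by (subst (asm) eq_nat_nat_iff) auto
      have "int i = ((int i - c) mod int n + c) mod int n" using i by (simp add: mod_add_left_eq)
      also have "\<dots> = ((int i' - c) mod int n + c) mod int n" using e2 by simp
      also have "\<dots> = int i'" using i' by (simp add: mod_add_left_eq)
      finally show "i = i'" by simp
    qed
  next
    show "(\<lambda>i. nat ((int i - c) mod int n)) ` {i. i < n \<and> Q ((int i - c) mod int n)} = {j. j < n \<and> Q (int j)}"
    proof
      show "(\<lambda>i. nat ((int i - c) mod int n)) ` {i. i < n \<and> Q ((int i - c) mod int n)} \<subseteq> {j. j < n \<and> Q (int j)}"
        using assms nat_mod_lt by auto
    next
      show "{j. j < n \<and> Q (int j)} \<subseteq> (\<lambda>i. nat ((int i - c) mod int n)) ` {i. i < n \<and> Q ((int i - c) mod int n)}"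
      proof
        fix j assume j: "j \<in> {j. j < n \<and> Q (int j)}"
        define i where "i = nat ((int j + c) mod int n)"
        have ii: "int i = (int j + c) mod int n" using assms unfolding i_def by simp
        have "(int i - c) mod int n = (int j + c - c) mod int n" unfolding ii by (simp add: mod_diff_left_eq)
        also have "\<dots> = int j" using j by simp
        finally have h: "(int i - c) mod int n = int j" .
        have "i < n" using assms ii by (metis Euclidean_Rings.pos_mod_bound of_nat_0_less_iff of_nat_less_iff)
        then show "j \<in> (\<lambda>i. nat ((int i - c) mod int n)) ` {i. i < n \<and> Q ((int i - c) mod int n)}"
          using h j by (intro image_eqI[of _ _ i]) auto
      qed
    qed
  qed
qed

lemma card_lt: "l \<le> n \<Longrightarrow> card {j. j < n \<and> int j < int l} = l"
proof -
  assume "l \<le> n"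
  then have "{j. j < n \<and> int j < int l} = {..<l}" by auto
  then show ?thesis by simp
qed

lemma card_arc_mem:
  assumes "n > 0" "l \<le> n" "u < n"
  shows "card {i. i < n \<and> u \<in> arc n (int i) l} = l"
proof -
  have "{i. i < n \<and> u \<in> arc n (int i) l} = (if u < n then {i. i < n \<and> (int u - int i) mod int n < int l} else {})"
    unfolding arc_def by auto
  moreover have "card {i. i < n \<and> (int u - int i) mod int n < int l} = l"
    using reidx_minus[OF assms(1), of "\<lambda>x. x < int l"] card_lt[OF assms(2)] by simp
  ultimately show ?thesis using assms(3) by simp
qed

lemma card_arc:
  assumes "n > 0" "l \<le> n"
  shows "card (arc n a l) = l"
proof -
  have "arc n a l = {i. i < n \<and> (int i - a) mod int n < int l}" unfolding arc_def by auto
  then show ?thesis using reidx_plus[OF assms(1), of "\<lambda>x. x < int l" a] card_lt[OF assms(2)] by simp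
qed



lemma count_sep:
  assumes n3: "n \<ge> 3" and uv: "u < n" "v < n"
  shows "card {i. i < n \<and> u \<in> arc n (int i) (n div 2) \<and> v \<notin> arc n (int i) (n div 2)} = nat (cdist n u v)"
proof -
  define k where "k = n div 2"
  define d where "d = (int v - int u) mod int n"
  have n0: "n > 0" using n3 by simp
  have k2: "2 * k \<le> n" "n \<le> 2 * k + 1" unfolding k_def by auto
  have d0: "0 \<le> d" "d < int n" unfolding d_def using n0 by auto
  have pw: "(int v - int i) mod int n = ((int u - int i) mod int n + d) mod int n" for i
  proof -
    have "((int u - int i) mod int n + d) mod int n = ((int u - int i) + (int v - int u)) mod int n"
      unfolding d_def by (simp add: mod_add_eq)
    then show ?thesis by simp
  qed
  define Q where "Q = (\<lambda>x. x < int k \<and> \<not> ((x + d) mod int n < int k))"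
  have "{i. i < n \<and> u \<in> arc n (int i) k \<and> v \<notin> arc n (int i) k} = {i. i < n \<and> Q ((int u - int i) mod int n)}"
    unfolding arc_def Q_def using uv pw by auto
  then have c1: "card {i. i < n \<and> u \<in> arc n (int i) k \<and> v \<notin> arc n (int i) k} = card {j. j < n \<and> Q (int j)}"
    using reidx_minus[OF n0, of Q "int u"] by simp
  have uvm: "(int u - int v) mod int n = (if d = 0 then 0 else int n - d)"
  proof -
    have "(int u - int v) = - (int v - int u)" by simp
    then have "(int u - int v) mod int n = (- (int v - int u)) mod int n" by simp
    also have "\<dots> = (if d = 0 then 0 else int n - d)" unfolding d_def by (rule zmod_zminus1_eq_if)
    finally show ?thesis .
  qed
  show ?thesis
  proof (cases "d \<le> int k")
    case True
    have "{j. j < n \<and> Q (int j)} = {nat (int k - d)..<k}"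
    proof (rule set_eqI, rule iffI)
      fix j assume "j \<in> {j. j < n \<and> Q (int j)}"
      then have j: "j < n" "int j < int k" "\<not> ((int j + d) mod int n < int k)" unfolding Q_def by auto
      have "(int j + d) mod int n = int j + d" using j True d0 k2 by (intro mod_pos_pos_trivial) auto
      then show "j \<in> {nat (int k - d)..<k}" using j by auto
    next
      fix j assume "j \<in> {nat (int k - d)..<k}"
      then have j: "int k - d \<le> int j" "j < k" by auto
      have "(int j + d) mod int n = int j + d" using j True d0 k2 by (intro mod_pos_pos_trivial) auto
      then show "j \<in> {j. j < n \<and> Q (int j)}" using j k2 unfolding Q_def by auto
    qed
    moreover have "cdist n u v = d" unfolding cdist_def d_def[symmetric] uvm using True k2 by auto
    moreover have "k - nat (int k - d) = nat d" using True d0 by linarith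
    ultimately have "card {i. i < n \<and> u \<in> arc n (int i) k \<and> v \<notin> arc n (int i) k} = nat (cdist n u v)"
      using c1 by simp
    then show ?thesis unfolding k_def .
  next
    case False
    have "{j. j < n \<and> Q (int j)} = {..<nat (int n - d)}"
    proof (rule set_eqI, rule iffI)
      fix j assume "j \<in> {j. j < n \<and> Q (int j)}"
      then have j: "j < n" "int j < int k" "\<not> ((int j + d) mod int n < int k)" unfolding Q_def by auto
      show "j \<in> {..<nat (int n - d)}"
      proof (rule ccontr)
        assume "j \<notin> {..<nat (int n - d)}"
        then have "int j \<ge> int n - d" by auto
        have "(int j + d) mod int n = (int j + d - int n) mod int n"
          by (metis mod_add_self2 diff_add_cancel)
        also have "\<dots> = int j + d - int n" using \<open>int j \<ge> int n - d\<close> j d0 k2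
          by (intro mod_pos_pos_trivial) auto
        finally show False using j d0 by linarith
      qed
    next
      fix j assume "j \<in> {..<nat (int n - d)}"
      then have j: "int j < int n - d" by auto
      have "(int j + d) mod int n = int j + d" using j d0 by (intro mod_pos_pos_trivial) auto
      then show "j \<in> {j. j < n \<and> Q (int j)}" using j k2 False unfolding Q_def by auto
    qed
    moreover have "cdist n u v = int n - d" unfolding cdist_def d_def[symmetric] uvm using False k2 by auto
    ultimately have "card {i. i < n \<and> u \<in> arc n (int i) k \<and> v \<notin> arc n (int i) k} = nat (cdist n u v)"
      using c1 by simp
    then show ?thesis unfolding k_def .
  qed
qed



definition gc :: "nat \<Rightarrow> nat set \<Rightarrow> nat \<Rightarrow> nat" where
  "gc n A i = card (A \<inter> arc n (int i) (n div 2))"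

lemma card_ind: "finite A \<Longrightarrow> (\<Sum>u\<in>A. (if u \<in> P then 1 else 0 :: nat)) = card (A \<inter> P)"
  by (simp add: sum.If_cases Int_def)

lemma card_ind2: fixes n :: nat shows "(\<Sum>i<n. (if C i then 1 else 0 :: nat)) = card {i. i < n \<and> C i}"
proof -
  have "(\<Sum>i<n. (if C i then 1 else 0 :: nat)) = card ({..<n} \<inter> {i. C i})"
    using card_ind[OF finite_lessThan[of n], of "{i. C i}"] by (simp del: Int_iff)
  also have "{..<n} \<inter> {i. C i} = {i. i < n \<and> C i}" by auto
  finally show ?thesis .
qed

lemma cdist_sym: "cdist n u v = cdist n v u"
  unfolding cdist_def by simp

lemma cdist_refl: "cdist n u u = 0"
  unfolding cdist_def by simp

lemma pair_sum:
  fixes f :: "nat \<Rightarrow> nat \<Rightarrow> nat"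
  assumes fin: "finite A" and sym: "\<And>u v. f u v = f v u" and refl: "\<And>u. f u u = 0"
  shows "(\<Sum>u\<in>A. \<Sum>v\<in>A. f u v) = 2 * (\<Sum>(u, v) \<in> {(u, v). u \<in> A \<and> v \<in> A \<and> u < v}. f u v)"
proof -
  define L where "L = {(u, v). u \<in> A \<and> v \<in> A \<and> u < v}"
  define D where "D = (\<lambda>u. (u, u)) ` A"
  have finAA: "finite (A \<times> A)" using fin by simp
  have LA: "L \<subseteq> A \<times> A" unfolding L_def by auto
  have finL: "finite L" using finite_subset[OF LA finAA] .
  have AA: "A \<times> A = L \<union> (prod.swap ` L \<union> D)"
    unfolding L_def D_def by (auto simp: image_iff)
  have finR: "finite (prod.swap ` L)" using finL by simp
  have finD: "finite D" unfolding D_def using fin by simp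
  have "(\<Sum>u\<in>A. \<Sum>v\<in>A. f u v) = (\<Sum>(u,v)\<in>A \<times> A. f u v)"
    by (simp add: sum.cartesian_product)
  also have "\<dots> = (\<Sum>(u,v)\<in>L. f u v) + (\<Sum>(u,v)\<in>prod.swap ` L \<union> D. f u v)"
    unfolding AA by (rule sum.union_disjoint) (use finL finR finD in \<open>auto simp: L_def D_def\<close>)
  also have "(\<Sum>(u,v)\<in>prod.swap ` L \<union> D. f u v) = (\<Sum>(u,v)\<in>prod.swap ` L. f u v) + (\<Sum>(u,v)\<in>D. f u v)"
    by (rule sum.union_disjoint) (use finR finD in \<open>auto simp: L_def D_def\<close>)
  also have "(\<Sum>(u,v)\<in>D. f u v) = 0" unfolding D_def using refl by (simp add: sum.reindex inj_on_def)
  also have "(\<Sum>(u,v)\<in>prod.swap ` L. f u v) = (\<Sum>(u,v)\<in>L. f u v)"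
    by (subst sum.reindex) (auto simp: inj_on_def sym intro!: sum.cong)
  finally show ?thesis unfolding L_def by simp
qed

lemma wiener_cd:
  assumes n3: "n \<ge> 3" and A: "A \<subseteq> cyc_V n"
  shows "(\<Sum>u\<in>A. \<Sum>v\<in>A. nat (cdist n u v)) = 2 * Wiener n A"
proof -
  have fin: "finite A" using A finite_subset unfolding cyc_V_def by blast
  have "(\<Sum>u\<in>A. \<Sum>v\<in>A. nat (cdist n u v)) = 2 * (\<Sum>(u, v) \<in> {(u, v). u \<in> A \<and> v \<in> A \<and> u < v}. nat (cdist n u v))"
    by (rule pair_sum[OF fin]) (auto simp: cdist_sym cdist_refl)
  also have "(\<Sum>(u, v) \<in> {(u, v). u \<in> A \<and> v \<in> A \<and> u < v}. nat (cdist n u v)) = Wiener n A"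
    unfolding Wiener_def using A n3 by (intro sum.cong) (auto simp: gdist_eq cyc_V_def)
  finally show ?thesis .
qed

lemma W2:
  assumes n3: "n \<ge> 3" and A: "A \<subseteq> cyc_V n"
  shows "2 * Wiener n A = (\<Sum>i<n. gc n A i * (card A - gc n A i))"
proof -
  define k where "k = n div 2"
  have fin: "finite A" using A finite_subset unfolding cyc_V_def by blast
  have AV: "\<And>u. u \<in> A \<Longrightarrow> u < n" using A unfolding cyc_V_def by auto
  have prod: "gc n A i * (card A - gc n A i) = (\<Sum>u\<in>A. \<Sum>v\<in>A. (if u \<in> arc n (int i) k \<and> v \<notin> arc n (int i) k then 1 else 0))" for i
  proof -
    have "card A - gc n A i = card (A - arc n (int i) k)"
      unfolding gc_def k_def using fin by (simp add: card_Diff_subset_Int Diff_Int2)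
    also have "\<dots> = card (A \<inter> - arc n (int i) k)" by (simp add: Diff_eq)
    also have "\<dots> = (\<Sum>v\<in>A. (if v \<notin> arc n (int i) k then 1 else 0))"
      using card_ind[OF fin, of "- arc n (int i) k"] by simp
    finally have e: "card A - gc n A i = (\<Sum>v\<in>A. (if v \<notin> arc n (int i) k then 1 else 0))" .
    have "gc n A i = (\<Sum>u\<in>A. (if u \<in> arc n (int i) k then 1 else 0))"
      unfolding gc_def k_def using card_ind[OF fin] by simp
    with e have "gc n A i * (card A - gc n A i) = (\<Sum>u\<in>A. (if u \<in> arc n (int i) k then 1 else 0)) * (\<Sum>v\<in>A. (if v \<notin> arc n (int i) k then 1 else 0))"
      by simp
    also have "\<dots> = (\<Sum>u\<in>A. \<Sum>v\<in>A. (if u \<in> arc n (int i) k then 1 else 0) * (if v \<notin> arc n (int i) k then 1 else 0))"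
      by (rule sum_product)
    finally show ?thesis by (simp add: if_distrib cong: if_cong) (intro sum.cong refl, auto)
  qed
  have "(\<Sum>i<n. gc n A i * (card A - gc n A i)) = (\<Sum>i<n. \<Sum>u\<in>A. \<Sum>v\<in>A. (if u \<in> arc n (int i) k \<and> v \<notin> arc n (int i) k then 1 else 0))"
    using prod by simp
  also have "\<dots> = (\<Sum>u\<in>A. \<Sum>i<n. \<Sum>v\<in>A. (if u \<in> arc n (int i) k \<and> v \<notin> arc n (int i) k then 1 else 0))"
    by (rule sum.swap)
  also have "\<dots> = (\<Sum>u\<in>A. \<Sum>v\<in>A. \<Sum>i<n. (if u \<in> arc n (int i) k \<and> v \<notin> arc n (int i) k then 1 else 0))"
    by (intro sum.cong refl sum.swap)
  also have "\<dots> = (\<Sum>u\<in>A. \<Sum>v\<in>A. nat (cdist n u v))"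
  proof (intro sum.cong refl)
    fix u v assume "u \<in> A" "v \<in> A"
    then show "(\<Sum>i<n. (if u \<in> arc n (int i) k \<and> v \<notin> arc n (int i) k then 1 else 0)) = nat (cdist n u v)"
      unfolding card_ind2 k_def using count_sep[OF n3 AV AV] by simp
  qed
  also have "\<dots> = 2 * Wiener n A" by (rule wiener_cd[OF n3 A])
  finally show ?thesis by simp
qed

lemma sum_gc:
  assumes n3: "n \<ge> 3" and A: "A \<subseteq> cyc_V n"
  shows "(\<Sum>i<n. gc n A i) = (n div 2) * card A"
proof -
  define k where "k = n div 2"
  have fin: "finite A" using A finite_subset unfolding cyc_V_def by blast
  have AV: "\<And>u. u \<in> A \<Longrightarrow> u < n" using A unfolding cyc_V_def by auto
  have "(\<Sum>i<n. gc n A i) = (\<Sum>i<n. \<Sum>u\<in>A. (if u \<in> arc n (int i) k then 1 else 0))"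
    unfolding gc_def k_def using card_ind[OF fin] by simp
  also have "\<dots> = (\<Sum>u\<in>A. \<Sum>i<n. (if u \<in> arc n (int i) k then 1 else 0))" by (rule sum.swap)
  also have "\<dots> = (\<Sum>u\<in>A. k)"
  proof (intro sum.cong refl)
    fix u assume "u \<in> A"
    then show "(\<Sum>i<n. (if u \<in> arc n (int i) k then 1 else 0)) = k"
      unfolding card_ind2 k_def using card_arc_mem[of n "n div 2" u] n3 AV by simp
  qed
  finally show ?thesis unfolding k_def by simp
qed



lemma sq_identity:
  fixes x :: "nat \<Rightarrow> int" and c :: int
  shows "(\<Sum>i<n. (x i)^2) = int n * c^2 + 2 * c * ((\<Sum>i<n. x i) - int n * c) + ((\<Sum>i<n. x i) - int n * c)
           + (\<Sum>i<n. (x i - c)^2 - (x i - c))"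
proof -
  have "(\<Sum>i<n. (x i - c)^2 - (x i - c)) = (\<Sum>i<n. (x i)^2 - (2*c+1) * x i + (c^2 + c))"
    by (intro sum.cong refl) (simp add: power2_eq_square algebra_simps)
  also have "\<dots> = (\<Sum>i<n. (x i)^2) - (2*c+1) * (\<Sum>i<n. x i) + int n * (c^2 + c)"
    by (simp add: sum.distrib sum_subtractf sum_distrib_left)
  finally show ?thesis by (simp add: power2_eq_square algebra_simps)
qed

lemma term_nonneg: "(e::int)^2 - e \<ge> 0"
proof (cases "e \<ge> 1")
  case True then have "e * e \<ge> e * 1" by (intro mult_left_mono) auto
  then show ?thesis by (simp add: power2_eq_square)
next
  case False then have "e \<le> 0" by simp
  then show ?thesis by (simp add: power2_eq_square) (smt (verit) mult_nonpos_nonpos)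
qed

lemma term_nonneg': "(e::int) \<le> e^2"
  using term_nonneg[of e] by simp

lemma term_zero: "(e::int)^2 - e = 0 \<longleftrightarrow> e = 0 \<or> e = 1"
proof
  assume "e^2 - e = 0"
  then have "e * (e - 1) = 0" by (simp add: power2_eq_square algebra_simps)
  then show "e = 0 \<or> e = 1" by simp
qed auto

definition cval :: "nat \<Rightarrow> nat \<Rightarrow> int" where
  "cval n m = int ((n div 2) * m div n)"

definition good :: "nat \<Rightarrow> nat set \<Rightarrow> bool" where
  "good n B \<longleftrightarrow> (\<forall>i<n. int (gc n B i) = cval n (card B) \<or> int (gc n B i) = cval n (card B) + 1)"

definition Lb :: "nat \<Rightarrow> nat \<Rightarrow> int" where
  "Lb n m = (let c = cval n m; T = int ((n div 2) * m) in int n * c^2 + 2 * c * (T - int n * c) + (T - int n * c))"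

definition Dev :: "nat \<Rightarrow> nat set \<Rightarrow> int" where
  "Dev n B = (\<Sum>i<n. (int (gc n B i) - cval n (card B))^2 - (int (gc n B i) - cval n (card B)))"

lemma gc_le: "B \<subseteq> cyc_V n \<Longrightarrow> gc n B i \<le> card B"
  unfolding gc_def cyc_V_def by (intro card_mono) (auto intro: finite_subset)

lemma W_int:
  assumes n3: "n \<ge> 3" and B: "B \<subseteq> cyc_V n"
  shows "2 * int (Wiener n B) = int (n div 2) * int (card B)^2 - Lb n (card B) - Dev n B"
proof -
  define m where "m = card B"
  define x where "x = (\<lambda>i. int (gc n B i))"
  have T: "(\<Sum>i<n. x i) = int ((n div 2) * m)"
    unfolding x_def m_def using sum_gc[OF n3 B] by (metis of_nat_sum)
  have "int (2 * Wiener n B) = int (\<Sum>i<n. gc n B i * (m - gc n B i))"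
    using W2[OF n3 B] unfolding m_def by simp
  also have "\<dots> = (\<Sum>i<n. x i * (int m - x i))"
    unfolding x_def m_def using gc_le[OF B] by (simp add: of_nat_diff)
  also have "\<dots> = int m * (\<Sum>i<n. x i) - (\<Sum>i<n. (x i)^2)"
    by (simp add: sum_distrib_left sum_subtractf power2_eq_square algebra_simps)
  also have "(\<Sum>i<n. (x i)^2) = Lb n m + Dev n B"
  proof -
    have "(\<Sum>i<n. (x i)^2) = int n * (cval n m)^2 + 2 * (cval n m) * ((\<Sum>i<n. x i) - int n * (cval n m)) + ((\<Sum>i<n. x i) - int n * (cval n m))
           + (\<Sum>i<n. (x i - (cval n m))^2 - (x i - (cval n m)))" by (rule sq_identity)
    also have "\<dots> = Lb n m + Dev n B" unfolding T unfolding Lb_def Dev_def Let_def x_def m_def by simp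
    finally show ?thesis .
  qed
  finally show ?thesis unfolding T m_def by (simp add: power2_eq_square algebra_simps)
qed

lemma Dev_nonneg: "Dev n B \<ge> 0"
  unfolding Dev_def by (intro sum_nonneg term_nonneg)

lemma Dev_zero: "Dev n B = 0 \<longleftrightarrow> good n B"
proof -
  have "Dev n B = 0 \<longleftrightarrow> (\<forall>i\<in>{..<n}. (int (gc n B i) - cval n (card B))^2 - (int (gc n B i) - cval n (card B)) = 0)"
    unfolding Dev_def by (intro sum_nonneg_eq_0_iff) (auto intro: term_nonneg term_nonneg')
  also have "\<dots> \<longleftrightarrow> good n B" unfolding good_def term_zero by auto
  finally show ?thesis .
qed

lemma max_iff_good:
  assumes n3: "n \<ge> 3" and A: "A \<subseteq> cyc_V n"
    and ex: "\<exists>B. B \<subseteq> cyc_V n \<and> card B = card A \<and> good n B"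
  shows "is_maximizer n A \<longleftrightarrow> good n A"
proof
  assume mx: "is_maximizer n A"
  from ex obtain B where B: "B \<subseteq> cyc_V n" "card B = card A" "good n B" by auto
  have "Wiener n B \<le> Wiener n A" using mx B unfolding is_maximizer_def by auto
  moreover have "Dev n B = 0" using B Dev_zero by auto
  ultimately have "Dev n A \<le> 0" using W_int[OF n3 A] W_int[OF n3 B(1)] B(2) by simp
  then show "good n A" using Dev_nonneg[of n A] Dev_zero by auto
next
  assume g: "good n A"
  show "is_maximizer n A" unfolding is_maximizer_def
  proof (intro conjI allI impI)
    show "A \<subseteq> cyc_V n" by fact
    fix B assume B: "B \<subseteq> cyc_V n \<and> card B = card A"
    have "Dev n A = 0" using g Dev_zero by auto
    then have "2 * int (Wiener n B) \<le> 2 * int (Wiener n A)"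
      using W_int[OF n3 A] W_int[OF n3 conjunct1[OF B]] B Dev_nonneg[of n B] by simp
    then show "Wiener n B \<le> Wiener n A" by simp
  qed
qed



definition stp :: "nat \<Rightarrow> nat \<Rightarrow> nat \<Rightarrow> bool" where
  "stp n m t \<longleftrightarrow> Suc t * m div n = t * m div n + 1"

lemma F_step:
  assumes "m \<le> n" "n > 0"
  shows "Suc t * m div n = t * m div n \<or> Suc t * m div n = t * m div n + 1"
proof -
  have a: "t * m div n \<le> Suc t * m div n" by (intro div_le_mono) simp
  have "Suc t * m div n \<le> (t * m + n) div n" using assms by (intro div_le_mono) simp
  also have "\<dots> = t * m div n + 1" using assms by (simp add: div_add_self2)
  finally show ?thesis using a by linarith
qed

lemma count_int:
  assumes "m \<le> n" "n > 0"
  shows "card {t. a \<le> t \<and> t < a + l \<and> stp n m t} = (a + l) * m div n - a * m div n"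
proof (induction l)
  case 0 then show ?case by simp
next
  case (Suc l)
  have mono: "a * m div n \<le> (a + l) * m div n" by (intro div_le_mono) simp
  have e: "{t. a \<le> t \<and> t < a + Suc l \<and> stp n m t} = {t. a \<le> t \<and> t < a + l \<and> stp n m t} \<union> (if stp n m (a + l) then {a + l} else {})"
    by (auto simp: less_Suc_eq)
  have fin: "finite {t. a \<le> t \<and> t < a + l \<and> stp n m t}" by (rule finite_subset[of _ "{..<a+l}"]) auto
  show ?case
  proof (cases "stp n m (a + l)")
    case True
    then have "card {t. a \<le> t \<and> t < a + Suc l \<and> stp n m t} = Suc (card {t. a \<le> t \<and> t < a + l \<and> stp n m t})"
      unfolding e using fin by simp
    then show ?thesis using Suc True mono unfolding stp_def by simp
  next
    case False
    then have "card {t. a \<le> t \<and> t < a + Suc l \<and> stp n m t} = card {t. a \<le> t \<and> t < a + l \<and> stp n m t}"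
      unfolding e by simp
    moreover have "Suc (a + l) * m div n = (a + l) * m div n"
      using False F_step[OF assms, of "a + l"] unfolding stp_def by auto
    ultimately show ?thesis using Suc by simp
  qed
qed

lemma F_period: fixes n x q m :: nat shows "n > 0 \<Longrightarrow> (x + n * q) * m div n = x * m div n + m * q"
proof -
  assume "n > 0"
  have "(x + n * q) * m = x * m + (m * q) * n" by (simp add: algebra_simps)
  then show ?thesis using \<open>n > 0\<close> by simp
qed

lemma stp_mod:
  assumes "n > 0"
  shows "stp n m (t mod n) = stp n m t"
proof -
  define r q where "r = t mod n" and "q = t div n"
  have t: "t = r + n * q" unfolding r_def q_def by simp
  have s: "Suc t = Suc r + n * q" using t by simp
  have e1: "Suc t * m div n = Suc r * m div n + m * q" using F_period[OF assms, of "Suc r" q m] s by simp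
  have e2: "t * m div n = r * m div n + m * q" using F_period[OF assms, of r q m] t by simp
  show ?thesis unfolding stp_def r_def[symmetric] e1 e2 by simp
qed

definition Bset :: "nat \<Rightarrow> nat \<Rightarrow> nat set" where
  "Bset n m = {v. v < n \<and> stp n m v}"

lemma Bset_card:
  assumes "m \<le> n" "n > 0"
  shows "card (Bset n m) = m"
proof -
  have "Bset n m = {t. 0 \<le> t \<and> t < 0 + n \<and> stp n m t}" unfolding Bset_def by auto
  then show ?thesis using count_int[OF assms, of 0 n] assms by simp
qed

lemma Bset_arc:
  assumes "m \<le> n" "n > 0" "i < n" "k < n"
  shows "Bset n m \<inter> arc n (int i) k = (\<lambda>t. t mod n) ` {t. i \<le> t \<and> t < i + k \<and> stp n m t}"
proof (rule set_eqI, rule iffI)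
  fix v assume v: "v \<in> Bset n m \<inter> arc n (int i) k"
  then have v1: "v < n" "stp n m v" "(int v - int i) mod int n < int k" unfolding Bset_def arc_def by auto
  define j where "j = nat ((int v - int i) mod int n)"
  have ij: "int j = (int v - int i) mod int n" unfolding j_def using assms by simp
  have jk: "j < k" using v1 ij by simp
  have "int ((i + j) mod n) = (int i + (int v - int i) mod int n) mod int n" using ij by (simp add: zmod_int)
  also have "\<dots> = (int i + (int v - int i)) mod int n" by (simp add: mod_add_right_eq)
  also have "\<dots> = int v" using v1 by simp
  finally have tv: "(i + j) mod n = v" by simp
  have "stp n m (i + j)" using v1(2) stp_mod[OF assms(2), of m "i+j"] tv by simp
  then show "v \<in> (\<lambda>t. t mod n) ` {t. i \<le> t \<and> t < i + k \<and> stp n m t}"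
    using tv jk by (intro image_eqI[of _ _ "i + j"]) auto
next
  fix v assume "v \<in> (\<lambda>t. t mod n) ` {t. i \<le> t \<and> t < i + k \<and> stp n m t}"
  then obtain t where t: "i \<le> t" "t < i + k" "stp n m t" "v = t mod n" by auto
  have "(int v - int i) mod int n = (int t mod int n - int i) mod int n" using t by (simp add: zmod_int)
  also have "\<dots> = (int t - int i) mod int n" by (simp add: mod_diff_left_eq)
  also have "\<dots> = int t - int i" using t assms by (intro mod_pos_pos_trivial) auto
  finally have "(int v - int i) mod int n < int k" using t by simp
  moreover have "stp n m v" using t stp_mod[OF assms(2)] by simp
  ultimately show "v \<in> Bset n m \<inter> arc n (int i) k" unfolding Bset_def arc_def using t assms by auto
qed

lemma inj_mod_interval:
  fixes n k i :: nat
  assumes "k \<le> n"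
  shows "inj_on (\<lambda>t. t mod n) {t. i \<le> t \<and> t < i + k \<and> P t}"
proof (rule inj_onI)
  fix x y assume x: "x \<in> {t. i \<le> t \<and> t < i + k \<and> P t}" and y: "y \<in> {t. i \<le> t \<and> t < i + k \<and> P t}"
    and e: "x mod n = y mod n"
  show "x = y"
  proof (rule ccontr)
    assume ne: "x \<noteq> y"
    {
      fix a b :: nat assume ab: "a < b" "a mod n = b mod n" "i \<le> a" "b < i + k"
      then have "n dvd (b - a)" using mod_eq_dvd_iff_nat[of a b n] by simp
      moreover have "0 < b - a" "b - a < n" using ab assms by auto
      ultimately have False using nat_dvd_not_less by blast
    }
    then show False using ne e x y by (metis (no_types, lifting) linorder_neqE_nat mem_Collect_eq)
  qed
qed

lemma gc_Bset:
  assumes "m \<le> n" "n \<ge> 3" "i < n"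
  shows "int (gc n (Bset n m) i) = cval n m \<or> int (gc n (Bset n m) i) = cval n m + 1"
proof -
  define k where "k = n div 2"
  have n0: "n > 0" "k < n" "k \<le> n" using assms unfolding k_def by auto
  have "gc n (Bset n m) i = card {t. i \<le> t \<and> t < i + k \<and> stp n m t}"
    unfolding gc_def k_def[symmetric] Bset_arc[OF assms(1) n0(1) assms(3) n0(2)]
    by (rule card_image[OF inj_mod_interval[OF n0(3)]])
  also have "\<dots> = (i + k) * m div n - i * m div n" by (rule count_int[OF assms(1) n0(1)])
  finally have g: "gc n (Bset n m) i = (i + k) * m div n - i * m div n" .
  define r where "r = i * m mod n"
  have im: "i * m = r + n * (i * m div n)" unfolding r_def by simp
  have r: "r < n" unfolding r_def using n0 by simp
  have "(i + k) * m = (r + k * m) + n * (i * m div n)" using im by (simp add: algebra_simps)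
  then have "(i + k) * m div n = (r + k * m) div n + i * m div n"
    using n0 by simp
  then have g2: "gc n (Bset n m) i = (r + k * m) div n" using g by simp
  have lo: "k * m div n \<le> (r + k * m) div n" by (intro div_le_mono) simp
  have "(r + k * m) div n \<le> (k * m + n) div n" using r by (intro div_le_mono) simp
  also have "\<dots> = k * m div n + 1" using n0 by (simp add: div_add_self2)
  finally have hi: "(r + k * m) div n \<le> k * m div n + 1" .
  have "gc n (Bset n m) i = k * m div n \<or> gc n (Bset n m) i = k * m div n + 1"
    using g2 lo hi by linarith
  then show ?thesis unfolding cval_def k_def by auto
qed

lemma good_exists:
  assumes "m \<le> n" "n \<ge> 3"
  shows "\<exists>B. B \<subseteq> cyc_V n \<and> card B = m \<and> good n B"
proof (intro exI conjI)
  show "Bset n m \<subseteq> cyc_V n" unfolding Bset_def cyc_V_def by auto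
  show c: "card (Bset n m) = m" using Bset_card assms by simp
  show "good n (Bset n m)" unfolding good_def c using gc_Bset[OF assms] by auto
qed



lemma arc_elem:
  assumes "n > 0" "j < l" "l \<le> n"
  shows "(nat (a mod int n) + j) mod n \<in> arc n a l"
proof -
  have "(int ((nat (a mod int n) + j) mod n) - a) mod int n = ((a mod int n + int j) mod int n - a) mod int n"
    using assms by (simp add: zmod_int)
  also have "\<dots> = (a mod int n + int j - a) mod int n" by (simp add: mod_diff_left_eq)
  also have "\<dots> = (int j + (a mod int n - a)) mod int n" by (simp add: algebra_simps)
  also have "\<dots> = (int j + (a - a)) mod int n" by (metis mod_add_right_eq mod_diff_left_eq)
  also have "\<dots> = int j" using assms by simp
  finally show ?thesis unfolding arc_def using assms by simp
qed

lemma arc_rep: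
  assumes "n > 0" "u \<in> arc n a l"
  shows "u = (nat (a mod int n) + nat ((int u - a) mod int n)) mod n" "nat ((int u - a) mod int n) < l"
proof -
  have u: "u < n" "(int u - a) mod int n < int l" using assms unfolding arc_def by auto
  have "int ((nat (a mod int n) + nat ((int u - a) mod int n)) mod n) = (a mod int n + (int u - a) mod int n) mod int n"
    using assms by (simp add: zmod_int)
  also have "\<dots> = (a + (int u - a)) mod int n" by (simp add: mod_add_eq)
  also have "\<dots> = int u" using u by simp
  finally show "u = (nat (a mod int n) + nat ((int u - a) mod int n)) mod n" by simp
  have "0 \<le> (int u - a) mod int n" using assms by simp
  then show "nat ((int u - a) mod int n) < l" using u by (simp add: nat_less_iff)
qed

lemma arc_conn:
  assumes n3: "n \<ge> 3" and l: "l \<le> n"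
  shows "conn_set n (arc n a l)"
  unfolding conn_set_def
proof (intro conjI ballI)
  show "arc n a l \<subseteq> cyc_V n" unfolding arc_def cyc_V_def by auto
  have n0: "n > 0" using n3 by simp
  fix u v assume u: "u \<in> arc n a l" and v: "v \<in> arc n a l"
  define b where "b = nat (a mod int n)"
  define s where "s = nat ((int u - a) mod int n)"
  define t where "t = nat ((int v - a) mod int n)"
  have us: "u = (b + s) mod n" "s < l" using arc_rep[OF n0 u] unfolding b_def s_def by auto
  have vt: "v = (b + t) mod n" "t < l" using arc_rep[OF n0 v] unfolding b_def t_def by auto
  have sub: "set (map (\<lambda>j. (b + j) mod n) [x..<Suc y]) \<subseteq> arc n a l" if "y < l" for x y
    using arc_elem[OF n0 _ l, of _ a] that unfolding b_def by auto
  show "\<exists>xs. is_walk (cyc_adj n) xs u v \<and> set xs \<subseteq> arc n a l"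
  proof (cases "s \<le> t")
    case True
    show ?thesis using walk_fw[OF n3 True, of b] sub[of t s] us vt
      by (intro exI[of _ "map (\<lambda>j. (b + j) mod n) [s..<Suc t]"]) (simp del: upt_Suc)
  next
    case False
    then have "t \<le> s" by simp
    show ?thesis using walk_bw[OF n3 \<open>t \<le> s\<close>, of b] sub[of s t] us vt
      by (intro exI[of _ "rev (map (\<lambda>j. (b + j) mod n) [t..<Suc s])"]) (simp del: upt_Suc)
  qed
qed

lemma arc_compl:
  assumes "n > 0" "k \<le> n"
  shows "cyc_V n - arc n a k = arc n (a + int k) (n - k)"
proof (rule set_eqI)
  fix v
  define x where "x = (int v - a) mod int n"
  have x: "0 \<le> x" "x < int n" unfolding x_def using assms by auto
  have "(int v - (a + int k)) mod int n = (x - int k) mod int n"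
    unfolding x_def by (simp add: mod_diff_left_eq algebra_simps)
  moreover have "(x - int k) mod int n < int (n - k) \<longleftrightarrow> \<not> x < int k"
  proof (cases "x < int k")
    case True
    have "(x - int k) mod int n = x - int k + int n"
    proof -
      have "(x - int k) mod int n = (x - int k + int n) mod int n" by simp
      also have "\<dots> = x - int k + int n" using True x assms by (intro mod_pos_pos_trivial) auto
      finally show ?thesis .
    qed
    then show ?thesis using True assms x by simp
  next
    case False
    have "(x - int k) mod int n = x - int k" using False x by (intro mod_pos_pos_trivial) auto
    then show ?thesis using False x assms by simp
  qed
  ultimately show "v \<in> cyc_V n - arc n a k \<longleftrightarrow> v \<in> arc n (a + int k) (n - k)"
    unfolding arc_def cyc_V_def x_def by auto
qed

lemma arc_mod: "arc n (a mod int n) l = arc n a l"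
  unfolding arc_def by (simp add: mod_diff_right_eq)



lemma phi_step:
  assumes n3: "n \<ge> 3" and adj: "cyc_adj n x y" and xc: "x \<noteq> c" and yc: "y \<noteq> c" and c: "c < n"
  shows "(int y - int c - 1) mod int n = (int x - int c - 1) mod int n + 1 \<or>
         (int x - int c - 1) mod int n = (int y - int c - 1) mod int n + 1"
proof -
  have xy: "x < n" "y < n" using adj unfolding cyc_adj_def by auto
  have ne: "(int z - int c - 1) mod int n \<noteq> int n - 1" if "z < n" "z \<noteq> c" for z
  proof
    assume h: "(int z - int c - 1) mod int n = int n - 1"
    have "int z mod int n = ((int z - int c - 1) mod int n + (int c + 1)) mod int n"
      by (simp add: mod_add_left_eq)
    also have "\<dots> = (int n + int c) mod int n" using h by simp
    also have "\<dots> = int c" using c by simp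
    finally show False using that by simp
  qed
  have gen: "(int b - int c - 1) mod int n = (int a - int c - 1) mod int n + 1"
    if h: "int b mod int n = (int a + 1) mod int n" and a: "a < n" "a \<noteq> c" for a b
  proof -
    define p where "p = (int a - int c - 1) mod int n"
    have p1: "0 \<le> p" "p < int n" "p \<noteq> int n - 1" using ne[OF a] n3 unfolding p_def by auto
    then have p: "0 \<le> p" "p < int n - 1" by linarith+
    have "(int b - int c - 1) mod int n = (int b mod int n - int c - 1) mod int n"
      by (metis mod_diff_left_eq)
    also have "\<dots> = ((int a + 1) mod int n - int c - 1) mod int n" using h by simp
    also have "\<dots> = (int a + 1 - int c - 1) mod int n" by (metis mod_diff_left_eq)
    also have "\<dots> = ((int a - int c - 1) + 1) mod int n" by (simp add: algebra_simps)
    also have "\<dots> = (p + 1) mod int n" unfolding p_def by (simp add: mod_add_left_eq)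
    also have "\<dots> = p + 1" using p by (intro mod_pos_pos_trivial) auto
    finally show ?thesis unfolding p_def .
  qed
  from adj_mod[OF adj] show ?thesis
    using gen[of y x] gen[of x y] xy xc yc by auto
qed



definition phi :: "nat \<Rightarrow> nat \<Rightarrow> nat \<Rightarrow> int" where
  "phi n c v = (int v - int c - 1) mod int n"

lemma ivt:
  assumes n3: "n \<ge> 3" and c: "c < n"
  shows "successively (cyc_adj n) xs \<Longrightarrow> xs \<noteq> [] \<Longrightarrow> c \<notin> set xs \<Longrightarrow>
    min (phi n c (hd xs)) (phi n c (last xs)) \<le> w \<Longrightarrow> w \<le> max (phi n c (hd xs)) (phi n c (last xs)) \<Longrightarrow>
    \<exists>z\<in>set xs. phi n c z = w"
proof (induction xs rule: induct_list012)
  case 1 then show ?case by simp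
next
  case (2 x) then show ?case by simp
next
  case (3 x y zs)
  have adj: "cyc_adj n x y" and s: "successively (cyc_adj n) (y # zs)" using "3.prems" by auto
  have st: "phi n c y = phi n c x + 1 \<or> phi n c x = phi n c y + 1"
    using phi_step[OF n3 adj _ _ c] "3.prems"(3) unfolding phi_def by auto
  show ?case
  proof (cases "phi n c x = w")
    case True then show ?thesis by auto
  next
    case False
    have "min (phi n c (hd (y#zs))) (phi n c (last (y#zs))) \<le> w \<and> w \<le> max (phi n c (hd (y#zs))) (phi n c (last (y#zs)))"
      using "3.prems"(4,5) False st by (simp add: min_def max_def split: if_splits) linarith+
    then show ?thesis using "3.IH"(2)[OF s] "3.prems"(3) by auto
  qed
qed

lemma conn_is_arc:
  assumes n3: "n \<ge> 3" and S: "conn_set n S" and cS: "card S = k" and k: "0 < k" "k < n"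
  shows "\<exists>a. S = arc n a k"
proof -
  have SV: "S \<subseteq> cyc_V n" using S unfolding conn_set_def by auto
  have finV: "finite (cyc_V n)" unfolding cyc_V_def by simp
  have cV: "card (cyc_V n) = n" unfolding cyc_V_def by simp
  have "S \<noteq> cyc_V n" using cS cV k by auto
  then obtain c where c: "c \<in> cyc_V n" "c \<notin> S" using SV by blast
  have cn: "c < n" using c unfolding cyc_V_def by simp
  define \<phi> where "\<phi> = phi n c"
  have n0: "n > 0" using n3 by simp
  have phi_range: "0 \<le> \<phi> v" "\<phi> v < int n" for v unfolding \<phi>_def phi_def using n0 by auto
  have phi_c: "\<phi> v = int n - 1 \<longleftrightarrow> v = c" if "v < n" for v
  proof
    assume h: "\<phi> v = int n - 1"
    have "int v mod int n = (\<phi> v + (int c + 1)) mod int n"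
      unfolding \<phi>_def phi_def by (simp add: mod_add_left_eq)
    also have "\<dots> = (int n + int c) mod int n" using h by simp
    also have "\<dots> = int c" using cn by simp
    finally show "v = c" using that by simp
  next
    assume "v = c"
    have "(int c - int c - 1) mod int n = (- 1) mod int n" by simp
    also have "\<dots> = int n - 1" using n3 by (simp add: zmod_zminus1_eq_if)
    finally show "\<phi> v = int n - 1" unfolding \<phi>_def phi_def using \<open>v = c\<close> by simp
  qed
  have phi_inj: "inj_on \<phi> (cyc_V n)"
  proof (rule inj_onI)
    fix x y assume x: "x \<in> cyc_V n" and y: "y \<in> cyc_V n" and e: "\<phi> x = \<phi> y"
    have "int x mod int n = (\<phi> x + (int c + 1)) mod int n"
      unfolding \<phi>_def phi_def by (simp add: mod_add_left_eq)
    also have "\<dots> = (\<phi> y + (int c + 1)) mod int n" using e by simp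
    also have "\<dots> = int y mod int n" unfolding \<phi>_def phi_def by (simp add: mod_add_left_eq)
    finally show "x = y" using x y unfolding cyc_V_def by simp
  qed
  have finS: "finite S" using finite_subset[OF SV finV] .
  have Sne: "S \<noteq> {}" using cS k by auto
  define lo where "lo = Min (\<phi> ` S)"
  define hi where "hi = Max (\<phi> ` S)"
  have "lo \<in> \<phi> ` S" unfolding lo_def using finS Sne by (intro Min_in) auto
  then obtain s1 where s1: "s1 \<in> S" "\<phi> s1 = lo" by auto
  have "hi \<in> \<phi> ` S" unfolding hi_def using finS Sne by (intro Max_in) auto
  then obtain s2 where s2: "s2 \<in> S" "\<phi> s2 = hi" by auto
  have bnd: "lo \<le> \<phi> s" "\<phi> s \<le> hi" if "s \<in> S" for s
    unfolding lo_def hi_def using that finS by auto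
  have img: "\<phi> ` S = {lo..hi}"
  proof
    show "\<phi> ` S \<subseteq> {lo..hi}" using bnd by auto
  next
    show "{lo..hi} \<subseteq> \<phi> ` S"
    proof
      fix w assume w: "w \<in> {lo..hi}"
      from S s1 s2 obtain xs where xs: "is_walk (cyc_adj n) xs s1 s2" "set xs \<subseteq> S"
        unfolding conn_set_def by blast
      have "\<exists>z\<in>set xs. \<phi> z = w"
        unfolding \<phi>_def
        by (rule ivt[OF n3 cn]) (use xs w s1 s2 c in \<open>auto simp: is_walk_def \<phi>_def\<close>)
      then show "w \<in> \<phi> ` S" using xs by auto
    qed
  qed
  have "card (\<phi> ` S) = k" using card_image[OF inj_on_subset[OF phi_inj SV]] cS by simp
  then have "nat (hi - lo + 1) = k" using img by simp
  then have hk: "hi = lo + int k - 1" using k by (simp add: nat_eq_iff split: if_splits)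
  have lo0: "0 \<le> lo" using phi_range s1 by auto
  have hin: "hi \<le> int n - 2"
  proof -
    have "\<phi> s2 \<noteq> int n - 1" using phi_c[of s2] s2 c SV unfolding cyc_V_def by auto
    then show ?thesis using phi_range[of s2] s2 by linarith
  qed
  show ?thesis
  proof (intro exI[of _ "int c + 1 + lo"] set_eqI iffI)
    fix v assume v: "v \<in> S"
    have vn: "v < n" using v SV unfolding cyc_V_def by auto
    have "(int v - (int c + 1 + lo)) mod int n = (\<phi> v - lo) mod int n"
      unfolding \<phi>_def phi_def by (simp add: mod_diff_left_eq algebra_simps)
    also have "\<dots> = \<phi> v - lo" using bnd[OF v] phi_range[of v] lo0 by (intro mod_pos_pos_trivial) auto
    finally show "v \<in> arc n (int c + 1 + lo) k" unfolding arc_def using vn bnd[OF v] hk by auto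
  next
    fix v assume v: "v \<in> arc n (int c + 1 + lo) k"
    have vn: "v < n" and m: "(int v - (int c + 1 + lo)) mod int n < int k" using v unfolding arc_def by auto
    have e: "(int v - (int c + 1 + lo)) mod int n = (\<phi> v - lo) mod int n"
      unfolding \<phi>_def phi_def by (simp add: mod_diff_left_eq algebra_simps)
    have "lo \<le> \<phi> v \<and> \<phi> v \<le> hi"
    proof (cases "lo \<le> \<phi> v")
      case True
      have "(\<phi> v - lo) mod int n = \<phi> v - lo" using True phi_range[of v] lo0 by (intro mod_pos_pos_trivial) auto
      then show ?thesis using True m e hk by auto
    next
      case False
      have "(\<phi> v - lo) mod int n = (\<phi> v - lo + int n) mod int n" by simp
      also have "\<dots> = \<phi> v - lo + int n" using False phi_range[of v] lo0 hin hk
        by (intro mod_pos_pos_trivial) auto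
      finally show ?thesis using m e hk hin phi_range[of v] by linarith
    qed
    then have "\<phi> v \<in> \<phi> ` S" using img by auto
    then obtain s where s: "s \<in> S" "\<phi> s = \<phi> v" by auto
    have "s = v" using phi_inj s SV vn unfolding inj_on_def cyc_V_def by auto
    then show "v \<in> S" using s by simp
  qed
qed



lemma bip_char:
  assumes n3: "n \<ge> 3" and PQ: "eq_conn_bipart n P Q"
  shows "\<exists>i<n. (P = arc n (int i) (n div 2) \<and> Q = cyc_V n - arc n (int i) (n div 2)) \<or>
               (Q = arc n (int i) (n div 2) \<and> P = cyc_V n - arc n (int i) (n div 2))"
proof -
  define k where "k = n div 2"
  have n0: "n > 0" and k: "0 < k" "k < n" using n3 unfolding k_def by auto
  have P: "P \<noteq> {}" "P \<inter> Q = {}" "P \<union> Q = cyc_V n" "\<bar>int (card P) - int (card Q)\<bar> \<le> 1"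
    "conn_set n P" "conn_set n Q" and Qne: "Q \<noteq> {}" using PQ unfolding eq_conn_bipart_def by auto
  have finV: "finite (cyc_V n)" unfolding cyc_V_def by simp
  have finP: "finite P" "finite Q" using P(3) finV by (metis finite_Un)+
  have "card P + card Q = n" using card_Un_disjoint[OF finP P(2)] P(3) unfolding cyc_V_def by simp
  then have "card P = k \<or> card Q = k" using P(4) unfolding k_def by linarith
  then show ?thesis
  proof
    assume cP: "card P = k"
    obtain a where a: "P = arc n a k" using conn_is_arc[OF n3 P(5) cP k] by blast
    define i where "i = nat (a mod int n)"
    have i: "i < n" "arc n (int i) k = arc n a k" unfolding i_def using n0 arc_mod[of n a k] nat_mod_lt[OF n0] by auto
    have "Q = cyc_V n - P" using P(2,3) by auto
    then show ?thesis using i a unfolding k_def[symmetric] by auto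
  next
    assume cQ: "card Q = k"
    obtain a where a: "Q = arc n a k" using conn_is_arc[OF n3 P(6) cQ k] by blast
    define i where "i = nat (a mod int n)"
    have i: "i < n" "arc n (int i) k = arc n a k" unfolding i_def using n0 arc_mod[of n a k] nat_mod_lt[OF n0] by auto
    have "P = cyc_V n - Q" using P(2,3) by auto
    then show ?thesis using i a unfolding k_def[symmetric] by auto
  qed
qed

lemma bip_arc:
  assumes n3: "n \<ge> 3" and i: "i < n"
  shows "eq_conn_bipart n (arc n (int i) (n div 2)) (cyc_V n - arc n (int i) (n div 2))"
        "eq_conn_bipart n (cyc_V n - arc n (int i) (n div 2)) (arc n (int i) (n div 2))"
proof -
  define k where "k = n div 2"
  have n0: "n > 0" and k: "0 < k" "k < n" "k \<le> n" using n3 unfolding k_def by auto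
  have c: "cyc_V n - arc n (int i) k = arc n (int i + int k) (n - k)" by (rule arc_compl[OF n0 k(3)])
  have ne1: "arc n (int i) k \<noteq> {}" using arc_elem[OF n0 k(1) k(3), of "int i"] by auto
  have ne2: "cyc_V n - arc n (int i) k \<noteq> {}" unfolding c using arc_elem[OF n0, of 0 "n - k" "int i + int k"] k by auto
  have sub: "arc n (int i) k \<subseteq> cyc_V n" unfolding arc_def cyc_V_def by auto
  have c1: "card (arc n (int i) k) = k" by (rule card_arc[OF n0 k(3)])
  have c2: "card (cyc_V n - arc n (int i) k) = n - k" unfolding c by (rule card_arc[OF n0]) simp
  have cn1: "conn_set n (arc n (int i) k)" by (rule arc_conn[OF n3 k(3)])
  have cn2: "conn_set n (cyc_V n - arc n (int i) k)" unfolding c by (rule arc_conn[OF n3]) simp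
  have d: "\<bar>int k - int (n - k)\<bar> \<le> 1" unfolding k_def by linarith
  show "eq_conn_bipart n (arc n (int i) (n div 2)) (cyc_V n - arc n (int i) (n div 2))"
    unfolding eq_conn_bipart_def k_def[symmetric] using ne1 ne2 sub c1 c2 cn1 cn2 d by auto
  show "eq_conn_bipart n (cyc_V n - arc n (int i) (n div 2)) (arc n (int i) (n div 2))"
    unfolding eq_conn_bipart_def k_def[symmetric] using ne1 ne2 sub c1 c2 cn1 cn2 d by auto
qed

lemma card_compl:
  assumes "A \<subseteq> cyc_V n"
  shows "card (A \<inter> (cyc_V n - X)) = card A - card (A \<inter> X)"
proof -
  have fin: "finite A" using assms finite_subset unfolding cyc_V_def by blast
  have "A \<inter> (cyc_V n - X) = A - (A \<inter> X)" using assms by auto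
  then show ?thesis using fin by (simp add: card_Diff_subset)
qed

lemma bal_char:
  assumes n3: "n \<ge> 3" and A: "A \<subseteq> cyc_V n"
  shows "balanced n A \<longleftrightarrow> (\<forall>i<n. \<bar>2 * int (gc n A i) - int (card A)\<bar> \<le> 1)"
proof
  assume b: "balanced n A"
  show "\<forall>i<n. \<bar>2 * int (gc n A i) - int (card A)\<bar> \<le> 1"
  proof (intro allI impI)
    fix i assume i: "i < n"
    have "\<bar>int (gc n A i) - int (card A - gc n A i)\<bar> \<le> 1"
      using b bip_arc(1)[OF n3 i] card_compl[OF A] unfolding balanced_def gc_def by metis
    then show "\<bar>2 * int (gc n A i) - int (card A)\<bar> \<le> 1" using gc_le[OF A, of i] by (simp add: of_nat_diff)
  qed
next
  assume h: "\<forall>i<n. \<bar>2 * int (gc n A i) - int (card A)\<bar> \<le> 1"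
  show "balanced n A" unfolding balanced_def
  proof (intro allI impI)
    fix P Q assume PQ: "eq_conn_bipart n P Q"
    from bip_char[OF n3 PQ] obtain i where i: "i < n" and
      c: "(P = arc n (int i) (n div 2) \<and> Q = cyc_V n - arc n (int i) (n div 2)) \<or>
          (Q = arc n (int i) (n div 2) \<and> P = cyc_V n - arc n (int i) (n div 2))" by blast
    have g: "gc n A i \<le> card A" by (rule gc_le[OF A])
    from c show "\<bar>int (card (A \<inter> P)) - int (card (A \<inter> Q))\<bar> \<le> 1"
      using h i g card_compl[OF A] unfolding gc_def by (auto simp: of_nat_diff)
  qed
qed

definition WBp :: "nat \<Rightarrow> nat \<Rightarrow> nat \<Rightarrow> bool" where
  "WBp n m g \<longleftrightarrow> \<bar>int g - int (m - g)\<bar> \<le> 2 \<and> (m - g = g + 2 \<longrightarrow> n div 2 < n - n div 2)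
      \<and> (g = m - g + 2 \<longrightarrow> n - n div 2 < n div 2)"

lemma wb_char:
  assumes n3: "n \<ge> 3" and A: "A \<subseteq> cyc_V n"
  shows "weakly_balanced n A \<longleftrightarrow> (\<forall>i<n. WBp n (card A) (gc n A i))"
proof
  assume b: "weakly_balanced n A"
  show "\<forall>i<n. WBp n (card A) (gc n A i)"
  proof (intro allI impI)
    fix i assume i: "i < n"
    define X where "X = arc n (int i) (n div 2)"
    have cX: "card X = n div 2" "card (cyc_V n - X) = n - n div 2"
      unfolding X_def using card_arc[of n "n div 2"] n3 arc_compl[of n "n div 2" "int i"] card_arc[of n "n - n div 2"] by auto
    have e: "card (A \<inter> (cyc_V n - X)) = card A - gc n A i" using card_compl[OF A] unfolding gc_def X_def by simp
    have g: "card (A \<inter> X) = gc n A i" unfolding gc_def X_def by simp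
    have bp1: "eq_conn_bipart n X (cyc_V n - X)" using bip_arc(1)[OF n3 i] unfolding X_def .
    have bp2: "eq_conn_bipart n (cyc_V n - X) X" using bip_arc(2)[OF n3 i] unfolding X_def .
    have 1: "\<bar>int (card (A \<inter> X)) - int (card (A \<inter> (cyc_V n - X)))\<bar> \<le> 2 \<and> (card (A \<inter> (cyc_V n - X)) = card (A \<inter> X) + 2 \<longrightarrow> card X < card (cyc_V n - X))"
      using b bp1 unfolding weakly_balanced_def by blast
    have 2: "card (A \<inter> X) = card (A \<inter> (cyc_V n - X)) + 2 \<longrightarrow> card (cyc_V n - X) < card X"
      using b bp2 unfolding weakly_balanced_def by blast
    note 1 = 1[unfolded e g cX] and 2 = 2[unfolded e g cX]
    show "WBp n (card A) (gc n A i)" unfolding WBp_def using 1 2 by blast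
  qed
next
  assume h: "\<forall>i<n. WBp n (card A) (gc n A i)"
  show "weakly_balanced n A" unfolding weakly_balanced_def
  proof (intro allI impI)
    fix P Q assume PQ: "eq_conn_bipart n P Q"
    from bip_char[OF n3 PQ] obtain i where i: "i < n" and
      c: "(P = arc n (int i) (n div 2) \<and> Q = cyc_V n - arc n (int i) (n div 2)) \<or>
          (Q = arc n (int i) (n div 2) \<and> P = cyc_V n - arc n (int i) (n div 2))" by blast
    define X where "X = arc n (int i) (n div 2)"
    have cX: "card X = n div 2" "card (cyc_V n - X) = n - n div 2"
      unfolding X_def using card_arc[of n "n div 2"] n3 arc_compl[of n "n div 2" "int i"] card_arc[of n "n - n div 2"] by auto
    have e: "card (A \<inter> (cyc_V n - X)) = card A - gc n A i" using card_compl[OF A] unfolding gc_def X_def by simp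
    have g: "card (A \<inter> X) = gc n A i" unfolding gc_def X_def by simp
    have w: "WBp n (card A) (gc n A i)" using h i by simp
    from c show "\<bar>int (card (A \<inter> P)) - int (card (A \<inter> Q))\<bar> \<le> 2 \<and> (card (A \<inter> Q) = card (A \<inter> P) + 2 \<longrightarrow> card P < card Q)"
    proof
      assume "P = arc n (int i) (n div 2) \<and> Q = cyc_V n - arc n (int i) (n div 2)"
      then have "P = X" "Q = cyc_V n - X" unfolding X_def by auto
      then show ?thesis using w e g cX unfolding WBp_def by auto
    next
      assume "Q = arc n (int i) (n div 2) \<and> P = cyc_V n - arc n (int i) (n div 2)"
      then have "Q = X" "P = cyc_V n - X" unfolding X_def by auto
      then show ?thesis using w e g cX unfolding WBp_def by (auto simp: abs_minus_commute)
    qed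
  qed
qed



lemma cval_even:
  assumes "even n" "n > 0"
  shows "cval n m = int (m div 2)"
proof -
  obtain k where n: "n = 2 * k" using assms by auto
  have "k > 0" using assms n by simp
  then have "k * m div (2 * k) = m div 2" by (metis div_mult_mult1 mult.commute neq0_conv)
  then show ?thesis unfolding cval_def n by simp
qed

lemma cval_odd_odd:
  assumes "odd n" "odd m" "m \<le> n"
  shows "cval n m = int (m div 2)"
proof -
  obtain k where n: "n = 2 * k + 1" using assms by (metis oddE)
  obtain p where m: "m = 2 * p + 1" using assms by (metis oddE)
  have pk: "p \<le> k" using assms n m by simp
  have "k * m div n = p"
  proof (rule div_nat_eqI)
    show "n * p \<le> k * m" unfolding n m using pk by (simp add: algebra_simps)
    show "k * m < n * Suc p" unfolding n m by (simp add: algebra_simps)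
  qed
  moreover have "n div 2 = k" "m div 2 = p" unfolding n m by auto
  ultimately show ?thesis unfolding cval_def by simp
qed

lemma cval_odd_even:
  assumes "odd n" "even m" "2 \<le> m" "m \<le> n"
  shows "cval n m = int (m div 2) - 1"
proof -
  obtain k where n: "n = 2 * k + 1" using assms by (metis oddE)
  obtain p where m: "m = 2 * p" using assms by auto
  have p1: "1 \<le> p" using assms m by simp
  then obtain q where q: "p = Suc q" using not0_implies_Suc by force
  have pk: "p \<le> k" using assms n m by simp
  have "k * m div n = q"
  proof (rule div_nat_eqI)
    show "n * q \<le> k * m" unfolding n m q using pk q by (simp add: algebra_simps)
    show "k * m < n * Suc q" unfolding n m q by (simp add: algebra_simps)
  qed
  moreover have "n div 2 = k" "m div 2 = p" unfolding n m by auto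
  ultimately show ?thesis unfolding cval_def using q by simp
qed

lemma sum_all_eq:
  fixes x :: "nat \<Rightarrow> int"
  assumes "\<forall>i<n. x i \<ge> p" "(\<Sum>i<n. x i) = int n * p"
  shows "\<forall>i<n. x i = p"
proof -
  have "(\<Sum>i<n. x i - p) = 0" using assms(2) by (simp add: sum_subtractf)
  then have "\<forall>i\<in>{..<n}. x i - p = 0" using assms(1) by (subst (asm) sum_nonneg_eq_0_iff) auto
  then show ?thesis by auto
qed

lemma sum_gc_int:
  assumes "n \<ge> 3" "A \<subseteq> cyc_V n"
  shows "(\<Sum>i<n. int (gc n A i)) = int (n div 2) * int (card A)"
  using sum_gc[OF assms] by (metis of_nat_mult of_nat_sum)



lemma WBp_even:
  assumes "even n" "g \<le> m"
  shows "WBp n m g \<longleftrightarrow> \<bar>2 * int g - int m\<bar> \<le> 1"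
proof -
  have "n - n div 2 = n div 2" using assms by auto
  then show ?thesis unfolding WBp_def using assms by (auto simp: of_nat_diff)
qed

lemma par_aux: fixes x y :: int shows "\<bar>2*x - (1+2*y)\<bar> \<le> 2 \<Longrightarrow> \<bar>2*x - (1+2*y)\<bar> \<le> 1"
  by (simp add: abs_if split: if_splits) presburger+

lemma WBp_odd_odd:
  assumes "odd n" "odd m" "g \<le> m"
  shows "WBp n m g \<longleftrightarrow> \<bar>2 * int g - int m\<bar> \<le> 1"
proof -
  have "n div 2 < n - n div 2" using assms by presburger
  moreover obtain p where "m = 2 * p + 1" using assms by (metis oddE)
  moreover have "g \<noteq> m - g + 2" using assms by presburger
  ultimately show ?thesis unfolding WBp_def using assms par_aux[of "int g" "int p"] by (auto simp: of_nat_diff)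
qed

lemma WBp_odd_even:
  assumes "odd n" "even m" "g \<le> m"
  shows "WBp n m g \<longleftrightarrow> (int g = int (m div 2) - 1 \<or> int g = int (m div 2))"
proof -
  have "n div 2 < n - n div 2" using assms by presburger
  moreover obtain p where "m = 2 * p" using assms by auto
  ultimately show ?thesis unfolding WBp_def using assms by (auto simp: of_nat_diff)
qed

lemma max_char:
  assumes n3: "n \<ge> 3" and A: "A \<subseteq> cyc_V n" and mn: "card A \<le> n"
  shows "is_maximizer n A \<longleftrightarrow> (\<forall>i<n. int (gc n A i) = cval n (card A) \<or> int (gc n A i) = cval n (card A) + 1)"
  using max_iff_good[OF n3 A good_exists[OF mn n3]] unfolding good_def by simp

theorem mainTheorem16:
  fixes n m :: nat and A :: "nat set"
  assumes "n \<ge> 3" and "A \<subseteq> cyc_V n" and "card A = m" and "2 \<le> m" and "m \<le> n"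
  shows "((even n \<or> odd m) \<longrightarrow> (is_maximizer n A \<longleftrightarrow> balanced n A))
       \<and> ((odd n \<and> even m) \<longrightarrow>
            ((is_maximizer n A \<longleftrightarrow> weakly_balanced n A) \<and>
             (\<forall>B. B \<subseteq> cyc_V n \<and> card B = m \<and> is_maximizer n B \<longrightarrow> \<not> balanced n B)))
       \<and> (is_maximizer n A \<longleftrightarrow> weakly_balanced n A)"
proof -
  note n3 = assms(1) and A = assms(2) and cA = assms(3) and m2 = assms(4) and mn = assms(5)
  have n0: "n > 0" using n3 by simp
  define g where "g = (\<lambda>i. gc n A i)"
  have gle: "g i \<le> m" for i unfolding g_def using gc_le[OF A] cA by simp
  have MX: "is_maximizer n A \<longleftrightarrow> (\<forall>i<n. int (g i) = cval n m \<or> int (g i) = cval n m + 1)"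
    using max_char[OF n3 A] cA mn unfolding g_def by simp
  have BL: "balanced n A \<longleftrightarrow> (\<forall>i<n. \<bar>2 * int (g i) - int m\<bar> \<le> 1)"
    using bal_char[OF n3 A] cA unfolding g_def by simp
  have WB: "weakly_balanced n A \<longleftrightarrow> (\<forall>i<n. WBp n m (g i))"
    using wb_char[OF n3 A] cA unfolding g_def by simp
  have SUM: "(\<Sum>i<n. int (g i)) = int (n div 2) * int m"
    using sum_gc_int[OF n3 A] cA unfolding g_def by simp
  show ?thesis
  proof (cases "even n")
    case ev: True
    have c: "cval n m = int (m div 2)" by (rule cval_even[OF ev n0])
    have MX': "is_maximizer n A \<longleftrightarrow> (\<forall>i<n. int (g i) = int (m div 2) \<or> int (g i) = int (m div 2) + 1)"
      using MX c by simp
    have WBeq: "weakly_balanced n A \<longleftrightarrow> balanced n A"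
      unfolding WB BL using WBp_even[OF ev gle] by simp
    have MB: "is_maximizer n A \<longleftrightarrow> balanced n A"
    proof (cases "even m")
      case True
      then obtain p where p: "m = 2 * p" by auto
      have BL': "balanced n A \<longleftrightarrow> (\<forall>i<n. int (g i) = int p)" unfolding BL p by auto
      show ?thesis
      proof
        assume "is_maximizer n A"
        then have h: "\<forall>i<n. int (g i) \<ge> int p" unfolding MX' p by auto
        obtain k where n: "n = 2 * k" using ev by auto
        have "(\<Sum>i<n. int (g i)) = int n * int p" using SUM by (simp add: n p)
        then have "\<forall>i<n. int (g i) = int p" using sum_all_eq[OF h] by simp
        then show "balanced n A" unfolding BL' .
      next
        assume "balanced n A"
        then show "is_maximizer n A" unfolding BL' MX' p by simp
      qed
    next
      case False
      then obtain p where p: "m = 2 * p + 1" by (metis oddE)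
      show ?thesis unfolding MX' BL p by auto
    qed
    show ?thesis using MB WBeq ev by simp
  next
    case od: False
    show ?thesis
    proof (cases "even m")
      case False
      then obtain p where p: "m = 2 * p + 1" by (metis oddE)
      have c: "cval n m = int (m div 2)" using cval_odd_odd[OF od False mn] .
      have WBeq: "weakly_balanced n A \<longleftrightarrow> balanced n A"
        unfolding WB BL using WBp_odd_odd[OF od False gle] by simp
      have MX': "is_maximizer n A \<longleftrightarrow> (\<forall>i<n. int (g i) = int (m div 2) \<or> int (g i) = int (m div 2) + 1)"
        using MX c by simp
      have MB: "is_maximizer n A \<longleftrightarrow> balanced n A" unfolding MX' BL p by auto
      show ?thesis using MB WBeq False by simp
    next
      case evm: True
      then obtain p where p: "m = 2 * p" by auto
      have c: "cval n m = int (m div 2) - 1" using cval_odd_even[OF od evm m2 mn] .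
      have MW: "is_maximizer n A \<longleftrightarrow> weakly_balanced n A"
        unfolding MX WB c using WBp_odd_even[OF od evm gle] by auto
      have NB: "\<not> balanced n B" if B: "B \<subseteq> cyc_V n" "card B = m" "is_maximizer n B" for B
      proof
        assume bB: "balanced n B"
        have h: "\<forall>i<n. int (gc n B i) = int p"
          using bB bal_char[OF n3 B(1)] B(2) unfolding p by auto
        have "(\<Sum>i<n. int (gc n B i)) = int n * int p" using h by simp
        moreover have "(\<Sum>i<n. int (gc n B i)) = int (n div 2) * int m"
          using sum_gc_int[OF n3 B(1)] B(2) by simp
        moreover obtain k where n: "n = 2 * k + 1" using od by (metis oddE)
        ultimately have "int (2 * k + 1) * int p = int k * int (2 * p)" unfolding p n by simp
        then have "p = 0" by (simp add: algebra_simps)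
        then show False using p m2 by simp
      qed
      show ?thesis using MW NB od evm by auto
    qed
  qed
qed

end
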